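(* Assume the input embeddings $e_1,\dots,e_N$ are orthonormal, the output embeddings $u_1,\dots,u_M$ are orthonormal, and $p(x)>0$ for all $x\in[N]$. Let $\Pi$ denote the orthogonal projection of $\mathbb{R}^d$ onto $\mathrm{span}\{u_i-u_j: i,j\in[M]\}$. Then for any initialization $W_0$, the gradient flow $\dot W_t=-\nabla\mathcal{L}(W_t)$ satisfies \[ \lim_{t\to\infty}\frac{W_t}{\log t}=\kappa\sum_{x\in[N]}\Pi(u_{f^*(x)})\otimes e_x \] for some constant $\kappa>0$.
   Context: Integers $N,M\ge2$, $d\ge\max(N,M)$. Fixed embeddings $e_1,\dots,e_N,u_1,\dots,u_M\in\mathbb{R}^d$, target $f^*:[N]\to[M]$, probability distribution $p$ on $[N]$. For $W\in\mathbb{R}^{d\times d}$: $p_W(y\mid x)=\exp(u_y^\top We_x)/\sum_{z\in[M]}\exp(u_z^\top We_x)$, $\mathcal{L}(W)=-\sum_x p(x)\log p_W(f^*(x)\mid x)$. Gradients are for the Frobenius inner product; $u\otimes e:=ue^\top$. *)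

theory Defs
  imports "HOL-Analysis.Analysis"
begin

text \<open>Matrices W in R^{d x d} are elements of real^'d^'d (row-indexed); the inner
product on this type is the Frobenius inner product sum_i sum_j A_ij B_ij.\<close>

definition outer :: "real^'d \<Rightarrow> real^'d \<Rightarrow> real^'d^'d" where
  "outer u e = (\<chi> i j. u $ i * e $ j)"

definition pW :: "('n \<Rightarrow> real^'d) \<Rightarrow> ('m::finite \<Rightarrow> real^'d) \<Rightarrow> real^'d^'d \<Rightarrow> 'n \<Rightarrow> 'm \<Rightarrow> real" where
  "pW e u W x y = exp (u y \<bullet> (W *v e x)) / (\<Sum>z\<in>UNIV. exp (u z \<bullet> (W *v e x)))"

definition loss :: "('n::finite \<Rightarrow> real) \<Rightarrow> ('n \<Rightarrow> real^'d) \<Rightarrow> ('m::finite \<Rightarrow> real^'d)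
    \<Rightarrow> ('n \<Rightarrow> 'm) \<Rightarrow> real^'d^'d \<Rightarrow> real" where
  "loss p e u fstar W = - (\<Sum>x\<in>UNIV. p x * ln (pW e u W x (fstar x)))"

definition orthonormal_family :: "('i \<Rightarrow> 'a::real_inner) \<Rightarrow> bool" where
  "orthonormal_family v \<longleftrightarrow> (\<forall>i j. v i \<bullet> v j = (if i = j then 1 else 0))"

definition orth_proj :: "'a::real_inner set \<Rightarrow> 'a \<Rightarrow> 'a" where
  "orth_proj S v = (THE q. q \<in> S \<and> (\<forall>s\<in>S. (v - q) \<bullet> s = 0))"

end

theory Submission
  imports Defs "HOL-Real_Asymp.Real_Asymp"
begin

lemma mono_helper:
  fixes f f' :: "real \<Rightarrow> real"
  assumes d: "\<And>t. t\<ge>0 \<Longrightarrow> (f has_real_derivative f' t) (at t within {0..})"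
    and nn: "\<And>t. t \<ge> 0 \<Longrightarrow> f' t \<ge> 0" and s0: "0 \<le> s" and st: "s \<le> t"
  shows "f s \<le> f t"
proof (rule DERIV_nonneg_imp_increasing_open[OF st])
  fix x assume x: "s < x" "x < t"
  have x0: "x \<ge> 0" "x > 0" using x s0 by linarith+
  have "(f has_real_derivative f' x) (at x within {0<..})"
    by (rule DERIV_subset[OF d[OF x0(1)]]) auto
  hence "(f has_real_derivative f' x) (at x)"
    using at_within_open[of x "{0<..}"] x0 by simp
  thus "\<exists>y. DERIV f x :> y \<and> y \<ge> 0" using nn[OF x0(1)] by blast
next
  have "continuous_on {0..} f"
    unfolding continuous_on_eq_continuous_within
    by (intro ballI DERIV_continuous[OF d]) simp
  thus "continuous_on {s..t} f" by (rule continuous_on_subset) (use s0 in auto)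
qed
lemma ln_squeeze:
  fixes g :: "real \<Rightarrow> real"
  assumes "A > 0" "k > 0" "K > 0"
    and "\<And>t. t \<ge> 0 \<Longrightarrow> ln (A + k*t) \<le> g t \<and> g t \<le> ln (A + K*t)"
  shows "((\<lambda>t. g t / ln t) \<longlongrightarrow> 1) at_top"
proof -
  have l1: "((\<lambda>t. ln (A + k*t) / ln t) \<longlongrightarrow> 1) at_top" using assms by real_asymp
  have l2: "((\<lambda>t. ln (A + K*t) / ln t) \<longlongrightarrow> 1) at_top" using assms by real_asymp
  show ?thesis
  proof (rule tendsto_sandwich)
  show "\<forall>\<^sub>F t in at_top. ln (A + k*t) / ln t \<le> g t / ln t"
    using eventually_gt_at_top[of 1]
    by eventually_elim (use assms(4) in \<open>auto intro!: divide_right_mono\<close>)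
  show "\<forall>\<^sub>F t in at_top. g t / ln t \<le> ln (A + K*t) / ln t"
    using eventually_gt_at_top[of 1]
    by eventually_elim (use assms(4) in \<open>auto intro!: divide_right_mono\<close>)
qed (use l1 l2 in auto)
qed

lemma scalar_flow:
  fixes z :: "real \<Rightarrow> 'm::finite \<Rightarrow> real" and a :: real and c :: 'm
  assumes a: "a > 0"
    and d: "\<And>t y. t \<ge> 0 \<Longrightarrow> ((\<lambda>t. z t y) has_real_derivative
          (a * ((if y = c then 1 else 0) - exp (z t y) / (\<Sum>w\<in>UNIV. exp (z t w))))) (at t within {0..})"
  shows "((\<lambda>t. z t y / ln t) \<longlongrightarrow> (if y = c then 1 else 0) - 1 / real CARD('m)) at_top"
proof -
  define S where "S t = (\<Sum>w\<in>UNIV. exp (z t w))" for t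
  define s where "s t y = exp (z t y) / S t" for t y
  have Spos: "S t > 0" for t unfolding S_def by (intro sum_pos) auto
  have spos: "s t y > 0" for t y unfolding s_def using Spos by auto
  have ssum: "(\<Sum>y\<in>UNIV. s t y) = 1" for t
    unfolding s_def using Spos[of t] by (simp add: sum_divide_distrib[symmetric] S_def)
  have sle1: "s t y \<le> 1" for t y
  proof -
    have "s t y \<le> (\<Sum>y\<in>UNIV. s t y)"
      by (rule member_le_sum) (use spos in \<open>auto intro: less_imp_le\<close>)
    thus ?thesis using ssum by simp
  qed
  have d': "((\<lambda>t. z t y) has_real_derivative (a * ((if y = c then 1 else 0) - s t y))) (at t within {0..})"
    if "t \<ge> 0" for t y using d[OF that] unfolding s_def S_def .
  have step1: "z t y - z t c \<le> z 0 y - z 0 c" if "t \<ge> 0" for t y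
  proof -
    have "(\<lambda>t. z t c - z t y) 0 \<le> (\<lambda>t. z t c - z t y) t"
    proof (rule mono_helper[where f = "\<lambda>t. z t c - z t y" and f' = "\<lambda>t. a * (1 - s t c) - a * ((if y = c then 1 else 0) - s t y)"])
      fix t :: real assume "t \<ge> 0"
      show "((\<lambda>t. z t c - z t y) has_real_derivative
              a * (1 - s t c) - a * ((if y = c then 1 else 0) - s t y)) (at t within {0..})"
        using d'[OF \<open>t\<ge>0\<close>, of c] d'[OF \<open>t\<ge>0\<close>, of y] by (auto intro!: derivative_eq_intros)
      show "0 \<le> a * (1 - s t c) - a * ((if y = c then 1 else 0) - s t y)"
        using sle1[of t c] spos[of t y] a by (auto simp: algebra_simps intro: order_trans[OF mult_left_le[of "s t c" a]] add_increasing2 less_imp_le)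
    qed (use that in auto)
    thus ?thesis by simp
  qed
  define Kc where "Kc = (\<Sum>w\<in>UNIV. exp (z 0 w - z 0 c))"
  have Kcpos: "Kc > 0" unfolding Kc_def by (intro sum_pos) auto
  have sc_low: "s t c \<ge> 1 / Kc" if "t \<ge> 0" for t
  proof -
    have "1 / s t c = (\<Sum>w\<in>UNIV. exp (z t w - z t c))"
      unfolding s_def S_def by (simp add: exp_diff sum_divide_distrib)
    also have "\<dots> \<le> Kc" unfolding Kc_def
      by (intro sum_mono) (use step1[OF that] in auto)
    finally show ?thesis using spos[of t c] Kcpos
      by (simp add: divide_simps mult.commute split: if_splits)
  qed
  have step2: "\<bar>z t w - z t y\<bar> \<le> \<bar>z 0 y - z 0 w\<bar>" if "t \<ge> 0" "y \<noteq> c" "w \<noteq> c" for t y w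
  proof -
    have "(\<lambda>t. 0 - (z t y - z t w)^2) 0 \<le> (\<lambda>t. 0 - (z t y - z t w)^2) t"
    proof (rule mono_helper[where f = "\<lambda>t. 0 - (z t y - z t w)^2" and
          f' = "\<lambda>t. 2 * a * ((z t y - z t w) * (s t y - s t w))"])
      fix t :: real assume "t \<ge> 0"
      show "((\<lambda>t. 0 - (z t y - z t w)^2) has_real_derivative
              2 * a * ((z t y - z t w) * (s t y - s t w))) (at t within {0..})"
      proof -
        have D: "((\<lambda>t. z t y - z t w) has_real_derivative a * (0 - s t y) - a * (0 - s t w)) (at t within {0..})"
          using DERIV_diff[OF d'[OF \<open>t\<ge>0\<close>, of y] d'[OF \<open>t\<ge>0\<close>, of w]] that by simp
        have der: "((\<lambda>t. 0 - (z t y - z t w)^2) has_real_derivative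
               0 - of_nat 2 * ((a * (0 - s t y) - a * (0 - s t w)) * (z t y - z t w)^(2 - Suc 0))) (at t within {0..})"
          by (rule DERIV_diff[OF DERIV_const DERIV_power[OF D]])
        have eq: "0 - of_nat 2 * ((a * (0 - s t y) - a * (0 - s t w)) * (z t y - z t w)^(2 - Suc 0))
            = 2 * a * ((z t y - z t w) * (s t y - s t w))" by (simp add: algebra_simps power2_eq_square)
        show ?thesis using der unfolding eq .
      qed
      have "(z t y - z t w) * (s t y - s t w) \<ge> 0"
      proof (cases "z t y \<le> z t w")
        case True
        hence "s t y \<le> s t w" unfolding s_def using Spos[of t] by (auto intro: divide_right_mono)
        thus ?thesis using True by (auto intro: mult_nonpos_nonpos)
      next
        case False
        hence "s t y \<ge> s t w" unfolding s_def using Spos[of t] by (auto intro: divide_right_mono)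
        thus ?thesis using False by auto
      qed
      thus "0 \<le> 2 * a * ((z t y - z t w) * (s t y - s t w))" using a by simp
    qed (use that in auto)
    hence "(z t y - z t w)^2 \<le> (z 0 y - z 0 w)^2" by simp
    hence "\<bar>z t y - z t w\<bar> \<le> \<bar>z 0 y - z 0 w\<bar>" by (simp add: abs_le_square_iff)
    thus ?thesis by linarith
  qed
  have step3: "((\<lambda>t. (z t c - z t y) / ln t) \<longlongrightarrow> 1) at_top" if yc: "y \<noteq> c" for y
  proof -
    define h where "h t = exp (z t c - z t y)" for t
    define K where "K = a * (1 + (\<Sum>w\<in>UNIV - {c}. exp \<bar>z 0 y - z 0 w\<bar>))"
    define h' where "h' t = a * s t c * (1 + (\<Sum>w\<in>UNIV - {c}. exp (z t w - z t y)))" for t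
    have hd: "(h has_real_derivative h' t) (at t within {0..})" if "t \<ge> 0" for t
    proof -
      have der: "(h has_real_derivative h t * (a * (1 - s t c) - a * (0 - s t y))) (at t within {0..})"
      proof -
        have D: "((\<lambda>t. z t c - z t y) has_real_derivative a * (1 - s t c) - a * (0 - s t y)) (at t within {0..})"
          using DERIV_diff[OF d'[OF that, of c] d'[OF that, of y]] yc by simp
        show ?thesis unfolding h_def[abs_def] by (rule DERIV_chain2[OF DERIV_exp D])
      qed
      have eq: "h t * (a * (1 - s t c) - a * (0 - s t y)) = h' t"
      proof -
        have "1 - s t c = (\<Sum>w\<in>UNIV - {c}. s t w)"
          using ssum[of t] by (simp add: sum.remove[of UNIV c])
        moreover have "h t * (a * (1 - s t c) - a * (0 - s t y)) = a * (h t * (1 - s t c) + h t * s t y)"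
          by (simp add: algebra_simps)
        ultimately have "h t * (a * (1 - s t c) - a * (0 - s t y))
              = a * ((\<Sum>w\<in>UNIV - {c}. h t * s t w) + h t * s t y)"
          by (simp add: sum_distrib_left)
        also have "\<dots> = h' t"
          unfolding h'_def h_def s_def
          by (simp add: algebra_simps sum_distrib_left exp_diff)
        finally show ?thesis .
      qed
      show ?thesis using der unfolding eq .
    qed
    have h'low: "h' t \<ge> a / Kc" if "t \<ge> 0" for t
    proof -
      have "a / Kc \<le> a * s t c" using mult_left_mono[OF sc_low[OF that], of a] a by simp
      also have "\<dots> \<le> a * s t c * (1 + (\<Sum>w\<in>UNIV - {c}. exp (z t w - z t y)))"
        using mult_left_mono[of 1 "1 + (\<Sum>w\<in>UNIV - {c}. exp (z t w - z t y))" "a * s t c"] a spos[of t c]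
        by (simp add: sum_nonneg)
      finally show ?thesis unfolding h'_def .
    qed
    have h'up: "h' t \<le> K" if "t \<ge> 0" for t
    proof -
      have "h' t \<le> a * 1 * (1 + (\<Sum>w\<in>UNIV - {c}. exp (z t w - z t y)))"
        unfolding h'_def using a spos[of t c] sle1[of t c]
        by (intro mult_right_mono mult_left_mono) (auto intro!: add_nonneg_nonneg sum_nonneg)
      also have "\<dots> \<le> K"
      proof -
        have "(\<Sum>w\<in>UNIV - {c}. exp (z t w - z t y)) \<le> (\<Sum>w\<in>UNIV - {c}. exp \<bar>z 0 y - z 0 w\<bar>)"
        proof (rule sum_mono)
          fix w assume "w \<in> UNIV - {c}"
          hence "\<bar>z t w - z t y\<bar> \<le> \<bar>z 0 y - z 0 w\<bar>" using step2[OF that yc, of w] by simp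
          thus "exp (z t w - z t y) \<le> exp \<bar>z 0 y - z 0 w\<bar>" by simp
        qed
        thus ?thesis unfolding K_def using a by simp
      qed
      finally show ?thesis .
    qed
    have Kpos: "K > 0" unfolding K_def using a by (intro mult_pos_pos add_pos_nonneg sum_nonneg) auto
    have bounds: "ln (h 0 + (a/Kc) * t) \<le> z t c - z t y \<and> z t c - z t y \<le> ln (h 0 + K * t)"
      if "t \<ge> 0" for t
    proof -
      have "(\<lambda>t. h t - h 0 - (a/Kc) * t) 0 \<le> (\<lambda>t. h t - h 0 - (a/Kc) * t) t"
      proof (rule mono_helper[where f = "\<lambda>t. h t - h 0 - (a/Kc) * t" and f' = "\<lambda>t. h' t - 0 - (a/Kc) * 1"])
        fix t :: real assume t: "t \<ge> 0"
        show "((\<lambda>t. h t - h 0 - (a/Kc) * t) has_real_derivative h' t - 0 - (a/Kc) * 1) (at t within {0..})"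
          by (intro DERIV_diff DERIV_cmult DERIV_ident DERIV_const hd t)
        show "0 \<le> h' t - 0 - (a/Kc) * 1" using h'low[OF t] by simp
      qed (use that in auto)
      hence l: "h 0 + (a/Kc) * t \<le> h t" by simp
      have "(\<lambda>t. h 0 + K * t - h t) 0 \<le> (\<lambda>t. h 0 + K * t - h t) t"
      proof (rule mono_helper[where f = "\<lambda>t. h 0 + K * t - h t" and f' = "\<lambda>t. 0 + K * 1 - h' t"])
        fix t :: real assume t: "t \<ge> 0"
        show "((\<lambda>t. h 0 + K * t - h t) has_real_derivative 0 + K * 1 - h' t) (at t within {0..})"
          by (intro DERIV_diff DERIV_add DERIV_cmult DERIV_ident DERIV_const hd t)
        show "0 \<le> 0 + K * 1 - h' t" using h'up[OF t] by simp
      qed (use that in auto)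
      hence r: "h t \<le> h 0 + K * t" by simp
      have h0: "h 0 > 0" unfolding h_def by simp
      have "ln (h 0 + (a/Kc) * t) \<le> ln (h t)"
        using l h0 that a Kcpos by (subst ln_le_cancel_iff) (auto intro: add_pos_nonneg simp: h_def)
      moreover have "ln (h t) \<le> ln (h 0 + K * t)"
        using r h0 that Kpos by (subst ln_le_cancel_iff) (auto simp: h_def intro: add_pos_nonneg)
      ultimately show ?thesis by (simp add: h_def)
    qed
    have "h 0 > 0" "a / Kc > 0" using a Kcpos by (auto simp: h_def)
    from ln_squeeze[OF this Kpos, of "\<lambda>t. z t c - z t y"] bounds
    show ?thesis by blast
  qed
  define S0 where "S0 = (\<Sum>w\<in>UNIV. z 0 w)"
  define M where "M = real CARD('m)"
  have Mpos: "M > 0" unfolding M_def by simp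
  have sumd: "((\<lambda>t. \<Sum>w\<in>UNIV. z t w) has_real_derivative (\<Sum>w\<in>UNIV. a * ((if w = c then 1 else 0) - s t w))) (at t within {0..})"
    if "t \<ge> 0" for t
    by (rule DERIV_sum) (rule d'[OF that])
  have sumd0: "(\<Sum>w\<in>UNIV. a * ((if w = c then 1 else 0) - s t w)) = 0" for t
    using ssum[of t] by (simp add: sum_subtractf sum_distrib_left[symmetric])
  have step5: "(\<Sum>w\<in>UNIV. z t w) = S0" if "t \<ge> 0" for t
  proof -
    have "(\<lambda>t. \<Sum>w\<in>UNIV. z t w) 0 \<le> (\<lambda>t. \<Sum>w\<in>UNIV. z t w) t"
      by (rule mono_helper[where f = "\<lambda>t. \<Sum>w\<in>UNIV. z t w" and f' = "\<lambda>t. 0"])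
         (use sumd sumd0 that in auto)
    moreover have "(\<lambda>t. 0 - (\<Sum>w\<in>UNIV. z t w)) 0 \<le> (\<lambda>t. 0 - (\<Sum>w\<in>UNIV. z t w)) t"
    proof (rule mono_helper[where f = "\<lambda>t. 0 - (\<Sum>w\<in>UNIV. z t w)" and f' = "\<lambda>t. 0 - 0"])
      fix t :: real assume t: "t \<ge> 0"
      show "((\<lambda>t. 0 - (\<Sum>w\<in>UNIV. z t w)) has_real_derivative 0 - 0) (at t within {0..})"
        using DERIV_diff[OF DERIV_const[of 0] sumd[OF t]] unfolding sumd0 .
    qed (use that in auto)
    ultimately show ?thesis unfolding S0_def by simp
  qed
  have zc_eq: "z t c = (S0 + (\<Sum>w\<in>UNIV - {c}. z t c - z t w)) / M" if "t \<ge> 0" for t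
  proof -
    have "(\<Sum>w\<in>UNIV - {c}. z t c - z t w) = (M - 1) * z t c - (\<Sum>w\<in>UNIV - {c}. z t w)"
      by (simp add: sum_subtractf M_def card_Diff_subset)
    moreover have "(\<Sum>w\<in>UNIV. z t w) = z t c + (\<Sum>w\<in>UNIV - {c}. z t w)"
      by (simp add: sum.remove[of UNIV c])
    ultimately show ?thesis using step5[OF that] Mpos by (simp add: field_simps)
  qed
  have lnlim: "((\<lambda>t. C / ln t) \<longlongrightarrow> 0) at_top" for C :: real
    by (rule tendsto_divide_0[OF tendsto_const filterlim_at_top_imp_at_infinity[OF ln_at_top]])
  have zc_lim: "((\<lambda>t. z t c / ln t) \<longlongrightarrow> 1 - 1 / M) at_top"
  proof -
    have "((\<lambda>t. (S0 / ln t + (\<Sum>w\<in>UNIV - {c}. (z t c - z t w) / ln t)) / M) \<longlongrightarrow>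
            (0 + (\<Sum>w\<in>UNIV - {c}. 1)) / M) at_top"
      by (intro tendsto_divide tendsto_add tendsto_sum lnlim tendsto_const step3) (use Mpos in auto)
    moreover have "(0 + (\<Sum>w\<in>UNIV - {c}. 1)) / M = 1 - 1 / M"
      using Mpos by (simp add: M_def card_Diff_subset field_simps)
    moreover have "\<forall>\<^sub>F t in at_top. (S0 / ln t + (\<Sum>w\<in>UNIV - {c}. (z t c - z t w) / ln t)) / M = z t c / ln t"
      using eventually_ge_at_top[of 0]
    proof eventually_elim
      case (elim t)
      define X where "X = (\<Sum>w\<in>UNIV - {c}. z t c - z t w)"
      have "z t c / ln t = ((S0 + X) / M) / ln t" using zc_eq[OF elim] unfolding X_def by simp
      also have "\<dots> = (S0 / ln t + X / ln t) / M"
        by (simp add: add_divide_distrib[symmetric] divide_divide_eq_left mult.commute)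
      also have "X / ln t = (\<Sum>w\<in>UNIV - {c}. (z t c - z t w) / ln t)"
        unfolding X_def by (simp add: sum_divide_distrib)
      finally show ?case by simp
    qed
    ultimately show ?thesis by (auto intro: Lim_transform_eventually)
  qed
  show ?thesis
  proof (cases "y = c")
    case True
    thus ?thesis using zc_lim unfolding M_def by simp
  next
    case False
    have "((\<lambda>t. z t c / ln t - (z t c - z t y) / ln t) \<longlongrightarrow> (1 - 1 / M) - 1) at_top"
      by (intro tendsto_diff zc_lim step3 False)
    moreover have "z t c / ln t - (z t c - z t y) / ln t = z t y / ln t" for t
      by (simp add: diff_divide_distrib)
    ultimately show ?thesis using False unfolding M_def by simp
  qed
qed

lemma outer_inner: "outer a b \<bullet> outer a' b' = (a \<bullet> a') * (b \<bullet> b')"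
  unfolding outer_def inner_vec_def
  by (simp add: sum_product algebra_simps)

lemma inner_outer_mat: "(W::real^'d^'d) \<bullet> outer a b = a \<bullet> (W *v b)"
  unfolding outer_def inner_vec_def matrix_vector_mult_def
  by (simp add: sum_distrib_left algebra_simps)

lemma outer_sum_left: "outer (\<Sum>y\<in>A. f y *\<^sub>R v y) b = (\<Sum>y\<in>A. f y *\<^sub>R outer (v y) b)"
  unfolding outer_def by (simp add: vec_eq_iff sum_distrib_left algebra_simps)

lemma loss_alt:
  fixes e :: "'n::finite \<Rightarrow> real^'d" and u :: "'m::finite \<Rightarrow> real^'d"
    and fstar :: "'n \<Rightarrow> 'm" and p :: "'n \<Rightarrow> real"
  shows "loss p e u fstar = (\<lambda>W. - (\<Sum>x\<in>UNIV. p x * (W \<bullet> outer (u (fstar x)) (e x)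
       - ln (\<Sum>z\<in>UNIV. exp (W \<bullet> outer (u z) (e x))))))"
proof
  fix W :: "real^'d^'d"
  have "ln (pW e u W x (fstar x)) = W \<bullet> outer (u (fstar x)) (e x) - ln (\<Sum>z\<in>UNIV. exp (W \<bullet> outer (u z) (e x)))" for x
  proof -
    have pos: "(\<Sum>z\<in>UNIV. exp (W \<bullet> outer (u z) (e x))) > 0" by (intro sum_pos) auto
    show ?thesis unfolding pW_def inner_outer_mat using pos
      by (simp add: ln_div inner_outer_mat)
  qed
  thus "loss p e u fstar W = - (\<Sum>x\<in>UNIV. p x * (W \<bullet> outer (u (fstar x)) (e x)
       - ln (\<Sum>z\<in>UNIV. exp (W \<bullet> outer (u z) (e x)))))"
    unfolding loss_def by simp
qed

lemma loss_deriv: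
  fixes e :: "'n::finite \<Rightarrow> real^'d" and u :: "'m::finite \<Rightarrow> real^'d"
    and fstar :: "'n \<Rightarrow> 'm" and p :: "'n \<Rightarrow> real"
  shows "(loss p e u fstar has_derivative (\<lambda>h. - (\<Sum>x\<in>UNIV. p x * (h \<bullet> outer (u (fstar x)) (e x)
       - (\<Sum>z\<in>UNIV. exp (W \<bullet> outer (u z) (e x)) * (h \<bullet> outer (u z) (e x)))
          / (\<Sum>z\<in>UNIV. exp (W \<bullet> outer (u z) (e x))))))) (at W)"
proof -
  have pos: "(\<Sum>z\<in>UNIV. exp (W \<bullet> outer (u z) (e x))) > 0" for x by (intro sum_pos) auto
  show ?thesis unfolding loss_alt
    apply (rule derivative_eq_intros refl | use pos in force)+
    apply (rule ext, rule arg_cong[where f=uminus], rule sum.cong[OF refl])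
    apply (simp add: sum_divide_distrib[symmetric] divide_inverse mult.commute)
    done
qed

lemma orthonormal_decomp:
  fixes B :: "'i::finite \<Rightarrow> 'a::real_inner" and V :: 'a
  assumes on: "\<And>i j. B i \<bullet> B j = (if i = j then 1 else 0)"
    and vanish: "\<And>h. (\<And>i. h \<bullet> B i = 0) \<Longrightarrow> h \<bullet> V = 0"
  shows "V = (\<Sum>i\<in>UNIV. (V \<bullet> B i) *\<^sub>R B i)"
proof -
  define R where "R = V - (\<Sum>i\<in>UNIV. (V \<bullet> B i) *\<^sub>R B i)"
  have RB: "R \<bullet> B j = 0" for j
  proof -
    have "R \<bullet> B j = V \<bullet> B j - (\<Sum>i\<in>UNIV. (V \<bullet> B i) * (B i \<bullet> B j))"
      unfolding R_def by (simp add: inner_diff_left inner_sum_left)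
    also have "(\<Sum>i\<in>UNIV. (V \<bullet> B i) * (B i \<bullet> B j)) = V \<bullet> B j"
      unfolding on by (simp add: if_distrib cong: if_cong)
    finally show ?thesis by simp
  qed
  have RV: "R \<bullet> V = 0" by (rule vanish) (rule RB)
  have "R \<bullet> (V - (\<Sum>i\<in>UNIV. (V \<bullet> B i) *\<^sub>R B i)) = R \<bullet> V - (\<Sum>i\<in>UNIV. (V \<bullet> B i) * (R \<bullet> B i))"
    by (simp add: inner_diff_right inner_sum_right)
  also have "\<dots> = 0" using RV RB by simp
  finally have "R \<bullet> R = 0" unfolding R_def[symmetric] .
  hence "R = 0" by simp
  thus ?thesis unfolding R_def by simp
qed

lemma orth_proj_u:
  fixes u :: "'m::finite \<Rightarrow> 'a::real_inner"
  assumes on: "orthonormal_family u"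
  shows "orth_proj (span {u i - u j | i j. True}) (u k) = u k - (1 / real CARD('m)) *\<^sub>R (\<Sum>y\<in>UNIV. u y)"
proof -
  define S where "S = span {u i - u j | i j. True}"
  define M where "M = real CARD('m)"
  define m where "m = (1 / M) *\<^sub>R (\<Sum>y\<in>UNIV. u y)"
  have Mpos: "M > 0" unfolding M_def by simp
  have on': "u i \<bullet> u j = (if i = j then 1 else 0)" for i j using on unfolding orthonormal_family_def by blast
  have inS: "u k - m \<in> S"
  proof -
    have c: "(\<Sum>y\<in>(UNIV::'m set). u k) = (\<Sum>y\<in>(UNIV::'m set). (1::real)) *\<^sub>R u k"
      by (simp only: scaleR_sum_left scaleR_one)
    have "(\<Sum>y\<in>UNIV. u k - u y) = M *\<^sub>R u k - (\<Sum>y\<in>UNIV. u y)"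
      by (simp add: sum_subtractf M_def c)
    note eq = this
    have "u k - m = (1 / M) *\<^sub>R (M *\<^sub>R u k - (\<Sum>y\<in>UNIV. u y))"
      unfolding m_def using Mpos by (simp add: scaleR_diff_right)
    also have "\<dots> = (1 / M) *\<^sub>R (\<Sum>y\<in>UNIV. u k - u y)" by (simp only: eq)
    also have "\<dots> \<in> S" unfolding S_def
      by (intro span_mul span_sum span_base) blast
    finally show ?thesis .
  qed
  have orth: "m \<bullet> s = 0" if "s \<in> S" for s
  proof -
    have "orthogonal m s"
    proof (rule orthogonal_to_span[OF that[unfolded S_def]])
      fix y assume "y \<in> {u i - u j | i j. True}"
      then obtain i j where y: "y = u i - u j" by blast
      have "(\<Sum>w\<in>UNIV. u w) \<bullet> u i = 1" for i
        by (simp add: inner_sum_left on')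
      thus "orthogonal m y" unfolding orthogonal_def m_def y
        by (simp add: inner_diff_right)
    qed
    thus ?thesis unfolding orthogonal_def .
  qed
  have "orth_proj S (u k) = u k - m"
    unfolding orth_proj_def
  proof (rule the_equality)
    show "u k - m \<in> S \<and> (\<forall>s\<in>S. (u k - (u k - m)) \<bullet> s = 0)" using inS orth by simp
  next
    fix q assume q: "q \<in> S \<and> (\<forall>s\<in>S. (u k - q) \<bullet> s = 0)"
    have d: "q - (u k - m) \<in> S" unfolding S_def using q inS unfolding S_def by (intro span_diff[of q]) auto
    have "(u k - q) \<bullet> (q - (u k - m)) = 0" using q d by blast
    moreover have "m \<bullet> (q - (u k - m)) = 0" using orth d by blast
    ultimately have "(q - (u k - m)) \<bullet> (q - (u k - m)) = 0"
      by (simp add: inner_diff_left inner_diff_right inner_commute algebra_simps)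
    thus "q = u k - m" by simp
  qed
  thus ?thesis unfolding S_def m_def M_def .
qed

theorem theorem3:
  fixes e :: "'n::finite \<Rightarrow> real^'d"
    and u :: "'m::finite \<Rightarrow> real^'d"
    and fstar :: "'n \<Rightarrow> 'm"
    and p :: "'n \<Rightarrow> real"
    and W0 :: "real^'d^'d"
    and W :: "real \<Rightarrow> real^'d^'d"
  assumes "CARD('n) \<ge> 2" and "CARD('m) \<ge> 2"
    and "CARD('d) \<ge> max CARD('n) CARD('m)"
    and "orthonormal_family e" and "orthonormal_family u"
    and "\<forall>x. p x > 0" and "(\<Sum>x\<in>UNIV. p x) = 1"
    and "W 0 = W0"
    and "\<forall>t\<ge>0. \<exists>G. (GDERIV (loss p e u fstar) (W t) :> G)
                    \<and> (W has_vector_derivative (- G)) (at t within {0..})"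
  shows "\<exists>\<kappa>>0. ((\<lambda>t. (1 / ln t) *\<^sub>R W t) \<longlongrightarrow>
           \<kappa> *\<^sub>R (\<Sum>x\<in>UNIV. outer (orth_proj (span {u i - u j | i j. True}) (u (fstar x))) (e x)))
         at_top"
proof -
  define B :: "'n \<times> 'm \<Rightarrow> real^'d^'d" where "B k = outer (u (snd k)) (e (fst k))" for k
  define M where "M = real CARD('m)"
  have Mpos: "M > 0" unfolding M_def by simp
  have ppos: "p x > 0" for x using assms(6) by blast
  have on_e: "e i \<bullet> e j = (if i = j then 1 else 0)" for i j
    using assms(4) unfolding orthonormal_family_def by blast
  have on_u: "u i \<bullet> u j = (if i = j then 1 else 0)" for i j
    using assms(5) unfolding orthonormal_family_def by blast
  have onB: "B i \<bullet> B j = (if i = j then 1 else 0)" for i j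
    unfolding B_def outer_inner on_e on_u by (cases i; cases j) auto
  have "\<forall>t. \<exists>G. t \<ge> 0 \<longrightarrow> (GDERIV (loss p e u fstar) (W t) :> G)
                    \<and> (W has_vector_derivative (- G)) (at t within {0..})"
    using assms(9) by blast
  then obtain G where G: "\<And>t. t \<ge> 0 \<Longrightarrow> (GDERIV (loss p e u fstar) (W t) :> G t)
                    \<and> (W has_vector_derivative (- G t)) (at t within {0..})"
    by metis
  define F' where "F' V h = - (\<Sum>x\<in>UNIV. p x * (h \<bullet> outer (u (fstar x)) (e x)
       - (\<Sum>z\<in>UNIV. exp (V \<bullet> outer (u z) (e x)) * (h \<bullet> outer (u z) (e x)))
          / (\<Sum>z\<in>UNIV. exp (V \<bullet> outer (u z) (e x)))))" for V h
  have Gh: "h \<bullet> G t = F' (W t) h" if t: "t \<ge> 0" for t h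
  proof -
    have "(loss p e u fstar has_derivative (\<lambda>h. h \<bullet> G t)) (at (W t))"
      using G[OF t] unfolding gderiv_def by blast
    from has_derivative_unique[OF this loss_deriv]
    show ?thesis unfolding F'_def by metis
  qed
  have F'B: "F' V h = - (\<Sum>x\<in>UNIV. p x * (h \<bullet> B (x, fstar x)
       - (\<Sum>z\<in>UNIV. exp (V \<bullet> B (x, z)) * (h \<bullet> B (x, z))) / (\<Sum>z\<in>UNIV. exp (V \<bullet> B (x, z)))))" for V h
    unfolding F'_def B_def by simp
  have Gdec: "G t = (\<Sum>k\<in>UNIV. (G t \<bullet> B k) *\<^sub>R B k)" if t: "t \<ge> 0" for t
  proof (rule orthonormal_decomp[OF onB])
    fix h assume h: "\<And>k. h \<bullet> B k = 0"
    show "h \<bullet> G t = 0" unfolding Gh[OF t] F'B h by simp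
  qed
  have GB: "B (x, y) \<bullet> G t = - (p x * ((if y = fstar x then 1 else 0)
        - exp (W t \<bullet> B (x, y)) / (\<Sum>z\<in>UNIV. exp (W t \<bullet> B (x, z)))))" if t: "t \<ge> 0" for t x y
  proof -
    have "(\<Sum>z\<in>UNIV. exp (W t \<bullet> B (x', z)) * (B (x, y) \<bullet> B (x', z)))
        = (if x = x' then exp (W t \<bullet> B (x', y)) else 0)" for x'
      unfolding onB by (auto simp: if_distrib cong: if_cong)
    hence "B (x, y) \<bullet> G t = - (\<Sum>x'\<in>UNIV. p x' * ((if x = x' \<and> y = fstar x' then 1 else 0)
       - (if x = x' then exp (W t \<bullet> B (x', y)) else 0) / (\<Sum>z\<in>UNIV. exp (W t \<bullet> B (x', z)))))"
      unfolding Gh[OF t] F'B onB by simp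
    also have "\<dots> = - (p x * ((if y = fstar x then 1 else 0)
        - exp (W t \<bullet> B (x, y)) / (\<Sum>z\<in>UNIV. exp (W t \<bullet> B (x, z)))))"
    proof -
      have "p x' * ((if x = x' \<and> y = fstar x' then 1 else 0)
       - (if x = x' then exp (W t \<bullet> B (x', y)) else 0) / (\<Sum>z\<in>UNIV. exp (W t \<bullet> B (x', z))))
        = (if x' = x then p x * ((if y = fstar x then 1 else 0)
        - exp (W t \<bullet> B (x, y)) / (\<Sum>z\<in>UNIV. exp (W t \<bullet> B (x, z)))) else 0)" for x'
        by auto
      thus ?thesis by simp
    qed
    finally show ?thesis .
  qed
  have zlim: "((\<lambda>t. (W t \<bullet> B (x, y)) / ln t) \<longlongrightarrow> (if y = fstar x then 1 else 0) - 1 / M) at_top" for x y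
  proof -
    have "((\<lambda>t. (\<lambda>t y. W t \<bullet> B (x, y)) t y / ln t) \<longlongrightarrow> (if y = fstar x then 1 else 0) - 1 / real CARD('m)) at_top"
    proof (rule scalar_flow[where a = "p x"])
      show "p x > 0" by (rule ppos)
      fix t :: real and y assume t: "t \<ge> 0"
      have "((\<lambda>t. W t \<bullet> B (x, y)) has_vector_derivative (- G t) \<bullet> B (x, y)) (at t within {0..})"
        by (rule bounded_linear.has_vector_derivative[OF bounded_linear_inner_left conjunct2[OF G[OF t]]])
      moreover have "(- G t) \<bullet> B (x, y) = p x * ((if y = fstar x then 1 else 0)
          - exp (W t \<bullet> B (x, y)) / (\<Sum>w\<in>UNIV. exp (W t \<bullet> B (x, w))))"
        using GB[OF t, of x y] by (simp add: inner_commute)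
      ultimately show "((\<lambda>t. (\<lambda>t y. W t \<bullet> B (x, y)) t y) has_real_derivative
          p x * ((if y = fstar x then 1 else 0) - exp ((\<lambda>t y. W t \<bullet> B (x, y)) t y) /
             (\<Sum>w\<in>UNIV. exp ((\<lambda>t y. W t \<bullet> B (x, y)) t w)))) (at t within {0..})"
        by (simp add: has_real_derivative_iff_has_vector_derivative)
    qed
    thus ?thesis unfolding M_def by simp
  qed
  define L where "L V = V - (\<Sum>k\<in>UNIV. (V \<bullet> B k) *\<^sub>R B k)" for V
  have linL: "linear L"
  proof (rule linearI)
    fix a b :: "real^'d^'d" and r :: real
    show "L (a + b) = L a + L b" unfolding L_def
      by (simp add: inner_add_left scaleR_add_left sum.distrib algebra_simps)
    show "L (r *\<^sub>R a) = r *\<^sub>R L a" unfolding L_def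
      by (simp add: scaleR_diff_right scaleR_sum_right)
  qed
  have blL: "bounded_linear L" using linL by (simp add: linear_conv_bounded_linear)
  have LG: "L (- G t) = 0" if "t \<ge> 0" for t
  proof -
    have "L (G t) = 0" unfolding L_def using Gdec[OF that] by simp
    thus ?thesis using linear_neg[OF linL] by simp
  qed
  have Lconst: "L (W t) = L (W 0)" if "t \<ge> 0" for t
  proof -
    have "\<exists>c. \<forall>x\<in>{0..}. L (W x) = c"
    proof (rule has_derivative_zero_constant)
      show "convex {0::real..}" by (rule convex_real_interval)
      fix x :: real assume x: "x \<in> {0..}"
      have "((\<lambda>t. L (W t)) has_vector_derivative L (- G x)) (at x within {0..})"
        by (rule bounded_linear.has_vector_derivative[OF blL conjunct2[OF G]]) (use x in auto)
      hence "((\<lambda>t. L (W t)) has_vector_derivative 0) (at x within {0..})" using LG x by simp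
      thus "((\<lambda>t. L (W t)) has_derivative (\<lambda>h. 0)) (at x within {0..})"
        unfolding has_vector_derivative_def by simp
    qed
    then obtain c where "\<forall>x\<in>{0..}. L (W x) = c" by blast
    thus ?thesis using that by simp
  qed
  have Wrep: "(1 / ln t) *\<^sub>R W t = (1 / ln t) *\<^sub>R L (W 0) + (\<Sum>k\<in>UNIV. ((W t \<bullet> B k) / ln t) *\<^sub>R B k)"
    if "t \<ge> 0" for t
  proof -
    have "W t = L (W 0) + (\<Sum>k\<in>UNIV. (W t \<bullet> B k) *\<^sub>R B k)"
      using Lconst[OF that] unfolding L_def[of "W t"] by (simp add: algebra_simps)
    hence "(1 / ln t) *\<^sub>R W t = (1 / ln t) *\<^sub>R (L (W 0) + (\<Sum>k\<in>UNIV. (W t \<bullet> B k) *\<^sub>R B k))"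
      by (rule arg_cong)
    also have "\<dots> = (1 / ln t) *\<^sub>R L (W 0) + (\<Sum>k\<in>UNIV. ((W t \<bullet> B k) / ln t) *\<^sub>R B k)"
      by (simp add: scaleR_add_right scaleR_sum_right)
    finally show ?thesis .
  qed
  define T where "T = (\<Sum>k\<in>UNIV. ((if snd k = fstar (fst k) then 1 else 0) - 1 / M) *\<^sub>R B k)"
  have lim: "((\<lambda>t. (1 / ln t) *\<^sub>R W t) \<longlongrightarrow> T) at_top"
  proof -
    have l0: "((\<lambda>t::real. 1 / ln t) \<longlongrightarrow> (0::real)) at_top"
      by (rule tendsto_divide_0[OF tendsto_const filterlim_at_top_imp_at_infinity[OF ln_at_top]])
    have "((\<lambda>t. (1 / ln t) *\<^sub>R L (W 0) + (\<Sum>k\<in>UNIV. ((W t \<bullet> B k) / ln t) *\<^sub>R B k)) \<longlongrightarrow>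
           0 *\<^sub>R L (W 0) + (\<Sum>k\<in>UNIV. ((if snd k = fstar (fst k) then 1 else 0) - 1 / M) *\<^sub>R B k)) at_top"
    proof (intro tendsto_add tendsto_scaleR tendsto_sum tendsto_const l0)
      fix k :: "'n \<times> 'm"
      show "((\<lambda>t. (W t \<bullet> B k) / ln t) \<longlongrightarrow> (if snd k = fstar (fst k) then 1 else 0) - 1 / M) at_top"
        using zlim[of "fst k" "snd k"] by simp
    qed
    moreover have "\<forall>\<^sub>F t in at_top. (1 / ln t) *\<^sub>R L (W 0) + (\<Sum>k\<in>UNIV. ((W t \<bullet> B k) / ln t) *\<^sub>R B k)
        = (1 / ln t) *\<^sub>R W t"
      using eventually_ge_at_top[of 0] by eventually_elim (simp add: Wrep)
    ultimately show ?thesis unfolding T_def by (auto intro: Lim_transform_eventually)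
  qed
  have Teq: "T = (\<Sum>x\<in>UNIV. outer (orth_proj (span {u i - u j | i j. True}) (u (fstar x))) (e x))"
  proof -
    have "outer (orth_proj (span {u i - u j | i j. True}) (u (fstar x))) (e x)
        = (\<Sum>y\<in>UNIV. ((if y = fstar x then 1 else 0) - 1 / M) *\<^sub>R B (x, y))" for x
    proof -
      have "u (fstar x) - (1 / M) *\<^sub>R (\<Sum>y\<in>UNIV. u y)
           = (\<Sum>y\<in>UNIV. ((if y = fstar x then 1 else 0) - 1 / M) *\<^sub>R u y)"
      proof -
        have "(\<Sum>y\<in>UNIV. ((if y = fstar x then 1 else 0) - 1 / M) *\<^sub>R u y)
            = (\<Sum>y\<in>UNIV. (if y = fstar x then 1 else 0) *\<^sub>R u y) - (\<Sum>y\<in>UNIV. (1 / M) *\<^sub>R u y)"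
          by (simp only: scaleR_diff_left sum_subtractf)
        also have "(\<Sum>y\<in>UNIV. (if y = fstar x then 1 else 0) *\<^sub>R u y) = (\<Sum>y\<in>UNIV. if y = fstar x then u y else 0)"
          by (rule sum.cong) auto
        also have "\<dots> = u (fstar x)" by simp
        finally show ?thesis by (simp add: scaleR_sum_right)
      qed
      thus ?thesis unfolding orth_proj_u[OF assms(5)] M_def[symmetric] B_def
        by (simp add: outer_sum_left)
    qed
    hence "(\<Sum>x\<in>UNIV. outer (orth_proj (span {u i - u j | i j. True}) (u (fstar x))) (e x))
        = (\<Sum>x\<in>UNIV. \<Sum>y\<in>UNIV. ((if y = fstar x then 1 else 0) - 1 / M) *\<^sub>R B (x, y))" by simp
    also have "\<dots> = T" unfolding T_def
      by (simp add: sum.cartesian_product UNIV_Times_UNIV[symmetric] case_prod_beta del: UNIV_Times_UNIV)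
    finally show ?thesis by simp
  qed
  show ?thesis
    by (rule exI[of _ 1]) (use lim Teq in simp)
qed

end
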